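(* In every polyhedral model $\mathcal{P}=(|K|,V)$, the relation $\equiv_\eta$ on $|K|$ is a weak simplicial bisimulation.
   Context: Fix a set PL of proposition letters. A simplex $\sigma\subseteq\mathbb{R}^m$ is the convex hull of $d+1$ affinely independent points; its faces are the simplices spanned by nonempty subsets of its vertices; its relative interior (cell) is $\tilde\sigma=\{\sum_i\lambda_iv_i:\lambda_i\in(0,1],\sum_i\lambda_i=1\}$. A simplicial complex $K$ is a finite set of simplices in $\mathbb{R}^m$ closed under faces, any two of which intersect in a common face or in $\emptyset$. The polyhedron $|K|$ is the union of its simplices with the subspace topology; the cells partition $|K|$. A polyhedral model is $\mathcal{P}=(|K|,V)$ with $V:\mathrm{PL}\to\mathcal{P}(|K|)$, each $V(p)$ a union of cells. A topological path from $x$ is a continuous $\pi:[0,1]\to|K|$ with $\pi(0)=x$. SLCS$_\eta$ formulas: $\Phi::=p\mid\neg\Phi\mid\Phi_1\wedge\Phi_2\mid\eta(\Phi_1,\Phi_2)$; $x\models p$ iff $x\in V(p)$; negation, conjunction standard; $x\models\eta(\Phi_1,\Phi_2)$ iff some topological path $\pi$ from $x$ has $\pi(1)\models\Phi_2$ and $\pi(r)\models\Phi_1$ for all $r\in[0,1)$. $x_1\equiv_\eta x_2$ means $x_1,x_2$ satisfy the same SLCS$_\eta$ formulas. A weak simplicial bisimulation is a symmetric relation $B\subseteq|K|\times|K|$ such that whenever $B(x_1,x_2)$: (1) for all $p$, $x_1\in V(p)$ iff $x_2\in V(p)$; (2) for each topological path $\pi_1$ from $x_1$ there is a topological path $\pi_2$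 from $x_2$ with $B(\pi_1(1),\pi_2(1))$ and such that for all $r_2\in[0,1)$ there is $r_1\in[0,1)$ with $B(\pi_1(r_1),\pi_2(r_2))$. *)

theory Defs
  imports "HOL-Analysis.Analysis"
begin

text \<open>A simplex is represented by its (finite, nonempty, affinely independent)
  vertex set; the simplex itself is the convex hull of the vertices.
  The ambient space R^m is an arbitrary Euclidean space type.\<close>

definition is_simplex :: "'a::euclidean_space set \<Rightarrow> bool" where
  "is_simplex S \<longleftrightarrow> finite S \<and> S \<noteq> {} \<and> \<not> affine_dependent S"

definition simplex_of :: "'a::euclidean_space set \<Rightarrow> 'a set" where
  "simplex_of S = convex hull S"

definition is_face :: "'a::euclidean_space set \<Rightarrow> 'a set \<Rightarrow> bool" where
  "is_face F S \<longleftrightarrow> F \<noteq> {} \<and> F \<subseteq> S"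

definition cell :: "'a::euclidean_space set \<Rightarrow> 'a set" where
  "cell S = {y. \<exists>l. (\<forall>v\<in>S. 0 < l v \<and> l v \<le> 1) \<and> sum l S = 1 \<and> y = (\<Sum>v\<in>S. l v *\<^sub>R v)}"

definition simplicial_complex :: "'a::euclidean_space set set \<Rightarrow> bool" where
  "simplicial_complex K \<longleftrightarrow>
     finite K \<and> (\<forall>S\<in>K. is_simplex S) \<and>
     (\<forall>S\<in>K. \<forall>F. is_face F S \<longrightarrow> F \<in> K) \<and>
     (\<forall>S\<in>K. \<forall>T\<in>K. simplex_of S \<inter> simplex_of T = {} \<or>
        (\<exists>F. is_face F S \<and> is_face F T \<and> simplex_of S \<inter> simplex_of T = simplex_of F))"

definition polyhedron :: "'a::euclidean_space set set \<Rightarrow> 'a set" where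
  "polyhedron K = (\<Union>S\<in>K. simplex_of S)"

definition polyhedral_model :: "'a::euclidean_space set set \<Rightarrow> ('p \<Rightarrow> 'a set) \<Rightarrow> bool" where
  "polyhedral_model K V \<longleftrightarrow> simplicial_complex K \<and>
     (\<forall>p. \<exists>C\<subseteq>K. V p = (\<Union>S\<in>C. cell S))"

definition topo_path :: "'a::euclidean_space set set \<Rightarrow> (real \<Rightarrow> 'a) \<Rightarrow> 'a \<Rightarrow> bool" where
  "topo_path K \<pi> x \<longleftrightarrow> path \<pi> \<and> path_image \<pi> \<subseteq> polyhedron K \<and> \<pi> 0 = x"

datatype 'p slcs = Atom 'p | Neg "'p slcs" | Conj "'p slcs" "'p slcs" | Eta "'p slcs" "'p slcs"

primrec sat :: "'a::euclidean_space set set \<Rightarrow> ('p \<Rightarrow> 'a set) \<Rightarrow> 'a \<Rightarrow> 'p slcs \<Rightarrow> bool" where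
  "sat K V x (Atom p) \<longleftrightarrow> x \<in> V p"
| "sat K V x (Neg f) \<longleftrightarrow> \<not> sat K V x f"
| "sat K V x (Conj f g) \<longleftrightarrow> sat K V x f \<and> sat K V x g"
| "sat K V x (Eta f g) \<longleftrightarrow> (\<exists>\<pi>. topo_path K \<pi> x \<and> sat K V (\<pi> 1) g \<and>
                                 (\<forall>r\<in>{0..<1}. sat K V (\<pi> r) f))"

definition eta_equiv :: "'a::euclidean_space set set \<Rightarrow> ('p \<Rightarrow> 'a set) \<Rightarrow> 'a \<Rightarrow> 'a \<Rightarrow> bool" where
  "eta_equiv K V x1 x2 \<longleftrightarrow> x1 \<in> polyhedron K \<and> x2 \<in> polyhedron K \<and>
     (\<forall>\<phi>. sat K V x1 \<phi> \<longleftrightarrow> sat K V x2 \<phi>)"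

definition weak_simplicial_bisim ::
    "'a::euclidean_space set set \<Rightarrow> ('p \<Rightarrow> 'a set) \<Rightarrow> ('a \<Rightarrow> 'a \<Rightarrow> bool) \<Rightarrow> bool" where
  "weak_simplicial_bisim K V B \<longleftrightarrow>
     (\<forall>x y. B x y \<longrightarrow> x \<in> polyhedron K \<and> y \<in> polyhedron K) \<and>
     (\<forall>x y. B x y \<longrightarrow> B y x) \<and>
     (\<forall>x1 x2. B x1 x2 \<longrightarrow>
        (\<forall>p. x1 \<in> V p \<longleftrightarrow> x2 \<in> V p) \<and>
        (\<forall>\<pi>1. topo_path K \<pi>1 x1 \<longrightarrow>
           (\<exists>\<pi>2. topo_path K \<pi>2 x2 \<and> B (\<pi>1 1) (\<pi>2 1) \<and>
              (\<forall>r2\<in>{0..<1}. \<exists>r1\<in>{0..<1}. B (\<pi>1 r1) (\<pi>2 r2)))))"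

end

theory Submission
  imports Defs
begin

lemma cell_sub_hull:
  assumes "finite S" shows "cell S \<subseteq> convex hull S"
proof
  fix y assume "y \<in> cell S"
  then obtain l where l: "\<forall>v\<in>S. 0 < l v \<and> l v \<le> 1" "sum l S = 1" "y = (\<Sum>v\<in>S. l v *\<^sub>R v)"
    unfolding cell_def by blast
  have "\<forall>v\<in>S. 0 \<le> l v" using l(1) by (simp add: less_imp_le)
  then show "y \<in> convex hull S" unfolding convex_hull_finite[OF assms] using l(2,3) by blast
qed

lemma convex_cell: "convex (cell S)"
  unfolding convex_def
proof (intro ballI allI impI)
  fix x y and u v :: real
  assume x: "x \<in> cell S" and y: "y \<in> cell S" and uv: "0 \<le> u" "0 \<le> v" "u + v = 1"
  from x obtain a where a: "\<forall>w\<in>S. 0 < a w \<and> a w \<le> 1" "sum a S = 1" "x = (\<Sum>w\<in>S. a w *\<^sub>R w)"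
    unfolding cell_def by blast
  from y obtain b where b: "\<forall>w\<in>S. 0 < b w \<and> b w \<le> 1" "sum b S = 1" "y = (\<Sum>w\<in>S. b w *\<^sub>R w)"
    unfolding cell_def by blast
  define c where "c w = u * a w + v * b w" for w
  have "\<forall>w\<in>S. 0 < c w \<and> c w \<le> 1"
  proof
    fix w assume w: "w \<in> S"
    have p: "0 < a w" "a w \<le> 1" "0 < b w" "b w \<le> 1" using a(1) b(1) w by auto
    have "0 < c w"
    proof (cases "u = 0")
      case True then show ?thesis using uv p by (simp add: c_def)
    next
      case False then have "u > 0" using uv by simp
      then have "u * a w > 0" using p by simp
      moreover have "v * b w \<ge> 0" using uv p by simp
      ultimately show ?thesis by (simp add: c_def)
    qed
    moreover have "c w \<le> u * 1 + v * 1" unfolding c_def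
      using uv p by (intro add_mono mult_left_mono) auto
    ultimately show "0 < c w \<and> c w \<le> 1" using uv by simp
  qed
  moreover have "sum c S = 1"
    using a(2) b(2) uv by (simp add: c_def sum.distrib sum_distrib_left[symmetric])
  moreover have "u *\<^sub>R x + v *\<^sub>R y = (\<Sum>w\<in>S. c w *\<^sub>R w)"
    using a(3) b(3) by (simp add: c_def scaleR_add_left sum.distrib scaleR_sum_right)
  ultimately show "u *\<^sub>R x + v *\<^sub>R y \<in> cell S" unfolding cell_def by blast
qed

lemma cell_sub_poly:
  assumes "simplicial_complex K" "S \<in> K" shows "cell S \<subseteq> polyhedron K"
proof -
  have "finite S" using assms unfolding simplicial_complex_def is_simplex_def by blast
  then show ?thesis using cell_sub_hull assms(2) unfolding polyhedron_def simplex_of_def by blast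
qed

lemma in_some_cell:
  assumes "simplicial_complex K" "x \<in> polyhedron K" shows "\<exists>F\<in>K. x \<in> cell F"
proof -
  from assms(2) obtain S where S: "S \<in> K" "x \<in> convex hull S"
    unfolding polyhedron_def simplex_of_def by blast
  have fin: "finite S" using assms(1) S(1) unfolding simplicial_complex_def is_simplex_def by blast
  from S(2) obtain u where u: "\<forall>v\<in>S. 0 \<le> u v" "sum u S = 1" "(\<Sum>v\<in>S. u v *\<^sub>R v) = x"
    unfolding convex_hull_finite[OF fin] by blast
  define F where "F = {v\<in>S. 0 < u v}"
  have FS: "F \<subseteq> S" unfolding F_def by blast
  have z: "\<forall>v\<in>S - F. u v = 0" using u(1) unfolding F_def by force
  have s1: "sum u F = 1" using sum.mono_neutral_left[OF fin FS z] u(2) by simp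
  have s2: "(\<Sum>v\<in>F. u v *\<^sub>R v) = x"
    using sum.mono_neutral_left[OF fin FS, of "\<lambda>v. u v *\<^sub>R v"] z u(3) by simp
  have Fne: "F \<noteq> {}" using s1 by auto
  have le: "\<forall>v\<in>F. 0 < u v \<and> u v \<le> 1"
  proof
    fix v assume v: "v \<in> F"
    have "u v \<le> sum u S" using member_le_sum[of v S u] v FS u(1) fin by auto
    then show "0 < u v \<and> u v \<le> 1" using v u(2) unfolding F_def by auto
  qed
  have "F \<in> K" using assms(1) S(1) Fne FS unfolding simplicial_complex_def is_face_def by blast
  moreover have "x \<in> cell F" unfolding cell_def using le s1 s2 by blast
  ultimately show ?thesis by blast
qed

lemma cell_face_sub:
  assumes "is_simplex S" "y \<in> cell S" "F \<subseteq> S" "y \<in> convex hull F"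
  shows "S \<subseteq> F"
proof -
  have fin: "finite S" and ind: "\<not> affine_dependent S" using assms(1) unfolding is_simplex_def by auto
  have finF: "finite F" using fin assms(3) finite_subset by blast
  from assms(2) obtain l where l: "\<forall>v\<in>S. 0 < l v \<and> l v \<le> 1" "sum l S = 1" "y = (\<Sum>v\<in>S. l v *\<^sub>R v)"
    unfolding cell_def by blast
  from assms(4) obtain m where m: "\<forall>v\<in>F. 0 \<le> m v" "sum m F = 1" "(\<Sum>v\<in>F. m v *\<^sub>R v) = y"
    unfolding convex_hull_finite[OF finF] by blast
  define m' where "m' v = (if v \<in> F then m v else 0)" for v
  have "sum m' S = sum m' F"
    by (rule sum.mono_neutral_right[OF fin assms(3)]) (auto simp: m'_def)
  also have "\<dots> = 1" using m(2) by (simp add: m'_def)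
  finally have sm: "sum m' S = 1" .
  have "(\<Sum>v\<in>S. m' v *\<^sub>R v) = (\<Sum>v\<in>F. m' v *\<^sub>R v)"
    by (rule sum.mono_neutral_right[OF fin assms(3)]) (auto simp: m'_def)
  also have "\<dots> = y" using m(3) by (simp add: m'_def)
  finally have sv: "(\<Sum>v\<in>S. m' v *\<^sub>R v) = y" .
  define U where "U v = l v - m' v" for v
  have "sum U S = 0" using sm l(2) by (simp add: U_def sum_subtractf)
  moreover have "(\<Sum>v\<in>S. U v *\<^sub>R v) = 0"
    using sv l(3) by (simp add: U_def scaleR_diff_left sum_subtractf)
  ultimately have "\<forall>v\<in>S. U v = 0"
    using ind affine_dependent_explicit_finite[OF fin] by blast
  then show ?thesis using l(1) by (auto simp: U_def m'_def split: if_splits)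
qed

lemma cells_disjoint:
  assumes "simplicial_complex K" "S \<in> K" "T \<in> K" "y \<in> cell S" "y \<in> cell T"
  shows "S = T"
proof -
  have sS: "is_simplex S" and sT: "is_simplex T"
    using assms unfolding simplicial_complex_def by auto
  have yS: "y \<in> simplex_of S" using cell_sub_hull sS assms(4) unfolding is_simplex_def simplex_of_def by blast
  have yT: "y \<in> simplex_of T" using cell_sub_hull sT assms(5) unfolding is_simplex_def simplex_of_def by blast
  obtain F where F: "is_face F S" "is_face F T" "simplex_of S \<inter> simplex_of T = simplex_of F"
    using assms(1-3) yS yT unfolding simplicial_complex_def by blast
  have yF: "y \<in> convex hull F" using F(3) yS yT unfolding simplex_of_def by blast
  have "S \<subseteq> F" using cell_face_sub[OF sS assms(4) _ yF] F(1) unfolding is_face_def by blast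
  moreover have "T \<subseteq> F" using cell_face_sub[OF sT assms(5) _ yF] F(2) unfolding is_face_def by blast
  ultimately show ?thesis using F unfolding is_face_def by blast
qed

lemma sat_cell:
  assumes pm: "polyhedral_model K V" and S: "S \<in> K"
  shows "\<And>x y. x \<in> cell S \<Longrightarrow> y \<in> cell S \<Longrightarrow> sat K V x \<phi> \<Longrightarrow> sat K V y \<phi>"
proof (induction \<phi>)
  have sc: "simplicial_complex K" using pm unfolding polyhedral_model_def by blast
  case (Atom p)
  obtain C where C: "C \<subseteq> K" "V p = (\<Union>S\<in>C. cell S)" using pm unfolding polyhedral_model_def by blast
  from Atom obtain T where T: "T \<in> C" "x \<in> cell T" using C by auto
  have "T = S" using cells_disjoint[OF sc _ S T(2) Atom(1)] T C by blast
  then show ?case using Atom C T by auto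
next
  have sc: "simplicial_complex K" using pm unfolding polyhedral_model_def by blast
  case (Neg f)
  then show ?case
  proof -
    { assume "sat K V y f"
      then have "sat K V x f" using Neg.IH[OF Neg(3) Neg(2)] by blast }
    then show ?thesis using Neg(4) by auto
  qed
next
  case (Conj f g)
  have "sat K V x f" "sat K V x g" using Conj.prems(3) by simp_all
  then have "sat K V y f" "sat K V y g" using Conj.IH Conj.prems(1,2) by blast+
  then show ?case by simp
next
  have sc: "simplicial_complex K" using pm unfolding polyhedral_model_def by blast
  case (Eta f g)
  from Eta.prems(3) obtain \<pi> where pi: "topo_path K \<pi> x" "sat K V (\<pi> 1) g" "\<forall>r\<in>{0..<1}. sat K V (\<pi> r) f"
    by (simp only: sat.simps) blast
  have xf: "sat K V x f" using pi(1) pi(3) unfolding topo_path_def by force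
  have segf: "\<forall>z\<in>closed_segment y x. sat K V z f"
  proof
    fix z assume "z \<in> closed_segment y x"
    then have "z \<in> cell S" using closed_segment_subset[OF Eta.prems(2) Eta.prems(1) convex_cell] by blast
    then show "sat K V z f" using Eta.IH(1)[OF Eta.prems(1) _ xf] by blast
  qed
  have segP: "closed_segment y x \<subseteq> polyhedron K"
    using closed_segment_subset[OF Eta.prems(2) Eta.prems(1) convex_cell] cell_sub_poly[OF sc S] by blast
  define \<rho> where "\<rho> = linepath y x +++ \<pi>"
  have "topo_path K \<rho> y"
    unfolding topo_path_def \<rho>_def
  proof (intro conjI)
    show "path (linepath y x +++ \<pi>)"
      using pi(1) unfolding topo_path_def by (intro path_join_imp) (auto simp: pathstart_def)
    show "path_image (linepath y x +++ \<pi>) \<subseteq> polyhedron K"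
      using path_image_join_subset[of "linepath y x" \<pi>] segP pi(1) unfolding topo_path_def by auto
    show "(linepath y x +++ \<pi>) 0 = y" by (simp add: joinpaths_def linepath_def)
  qed
  moreover have "\<rho> 1 = \<pi> 1" by (simp add: \<rho>_def joinpaths_def)
  moreover have "\<forall>r\<in>{0..<1}. sat K V (\<rho> r) f"
  proof
    fix r :: real assume r: "r \<in> {0..<1}"
    show "sat K V (\<rho> r) f"
    proof (cases "r \<le> 1/2")
      case True
      then have "\<rho> r = linepath y x (2 * r)" by (simp add: \<rho>_def joinpaths_def)
      moreover have "linepath y x (2 * r) \<in> closed_segment y x"
        using r True by (intro linepath_in_path) auto
      ultimately show ?thesis using segf by simp
    next
      case False
      then have "\<rho> r = \<pi> (2 * r - 1)" by (simp add: \<rho>_def joinpaths_def)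
      moreover have "2 * r - 1 \<in> {0..<1}" using r False by auto
      ultimately show ?thesis using pi(3) by simp
    qed
  qed
  ultimately show ?case using pi(2) by auto
qed


definition TT :: "'p slcs" where "TT = Neg (Conj (Atom undefined) (Neg (Atom undefined)))"

definition bigconj :: "'p slcs list \<Rightarrow> 'p slcs" where "bigconj xs = foldr Conj xs TT"

definition bigdisj :: "'p slcs list \<Rightarrow> 'p slcs" where "bigdisj xs = Neg (bigconj (map Neg xs))"

lemma sat_TT: "sat K V x TT" by (simp add: TT_def)

lemma sat_bigconj: "sat K V x (bigconj xs) \<longleftrightarrow> (\<forall>\<phi>\<in>set xs. sat K V x \<phi>)"
  by (induction xs) (auto simp: bigconj_def sat_TT)

lemma sat_bigdisj: "sat K V x (bigdisj xs) \<longleftrightarrow> (\<exists>\<phi>\<in>set xs. sat K V x \<phi>)"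
  by (auto simp: bigdisj_def sat_bigconj)

definition lst :: "'b set \<Rightarrow> 'b list" where "lst A = (SOME xs. set xs = A)"

lemma set_lst: "finite A \<Longrightarrow> set (lst A) = A"
  unfolding lst_def by (rule someI_ex) (rule finite_list)

theorem lemma11:
  fixes K :: "'a::euclidean_space set set" and V :: "'p \<Rightarrow> 'a set"
  assumes "polyhedral_model K V"
  shows "weak_simplicial_bisim K V (eta_equiv K V)"
proof -
  have sc: "simplicial_complex K" using assms unfolding polyhedral_model_def by blast
  have finK: "finite K" using sc unfolding simplicial_complex_def by blast
  let ?E = "eta_equiv K V"
  let ?P = "polyhedron K"
  have Esym: "\<And>x y. ?E x y \<Longrightarrow> ?E y x" unfolding eta_equiv_def by blast
  have Etrans: "\<And>x y z. ?E x y \<Longrightarrow> ?E y z \<Longrightarrow> ?E x z" unfolding eta_equiv_def by blast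
  define rep where "rep S = (SOME x. x \<in> cell S)" for S :: "'a set"
  define R where "R = rep ` {S\<in>K. cell S \<noteq> {}}"
  have finR: "finite R" unfolding R_def using finK by simp
  have RP: "R \<subseteq> ?P"
  proof
    fix a assume "a \<in> R"
    then obtain S where S: "S \<in> K" "cell S \<noteq> {}" "a = rep S" unfolding R_def by blast
    then have "a \<in> cell S" unfolding rep_def by (metis ex_in_conv someI_ex)
    then show "a \<in> ?P" using cell_sub_poly[OF sc S(1)] by blast
  qed
  have cover: "\<exists>a\<in>R. ?E x a" if x: "x \<in> ?P" for x
  proof -
    obtain F where F: "F \<in> K" "x \<in> cell F" using in_some_cell[OF sc x] by blast
    have rF: "rep F \<in> cell F" unfolding rep_def using F(2) by (rule someI)
    have "rep F \<in> R" unfolding R_def using F by blast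
    moreover have "?E x (rep F)" unfolding eta_equiv_def
      using x rF cell_sub_poly[OF sc F(1)] sat_cell[OF assms F(1) F(2) rF]
        sat_cell[OF assms F(1) rF F(2)] by blast
    ultimately show ?thesis by blast
  qed
  define d where "d a b = (SOME \<phi>. sat K V a \<phi> \<and> \<not> sat K V b \<phi>)" for a b
  have dab: "sat K V a (d a b) \<and> \<not> sat K V b (d a b)"
    if ab: "a \<in> ?P" "b \<in> ?P" "\<not> ?E a b" for a b
  proof -
    obtain \<phi> where "sat K V a \<phi> \<noteq> sat K V b \<phi>" using ab unfolding eta_equiv_def by blast
    then have "\<exists>\<psi>. sat K V a \<psi> \<and> \<not> sat K V b \<psi>"
      by (cases "sat K V a \<phi>") (auto intro: exI[where x="Neg \<phi>"])
    then show ?thesis unfolding d_def by (rule someI_ex)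
  qed
  define chi where "chi a = bigconj (lst (d a ` {b\<in>R. \<not> ?E a b}))" for a
  have chi: "sat K V y (chi a) \<longleftrightarrow> ?E a y" if a: "a \<in> ?P" and y: "y \<in> ?P" for a y
  proof -
    have fs: "finite (d a ` {b\<in>R. \<not> ?E a b})" using finR by simp
    have sc: "sat K V y (chi a) \<longleftrightarrow> (\<forall>b\<in>R. \<not> ?E a b \<longrightarrow> sat K V y (d a b))"
      unfolding chi_def sat_bigconj set_lst[OF fs] by blast
    show ?thesis
    proof
      assume H: "sat K V y (chi a)"
      obtain c where c: "c \<in> R" "?E y c" using cover[OF y] by blast
      have "?E a c"
      proof (rule ccontr)
        assume nE: "\<not> ?E a c"
        then have "sat K V y (d a c)" using H sc c(1) by blast
        then have "sat K V c (d a c)" using c(2) unfolding eta_equiv_def by blast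
        then show False using dab[OF a _ nE] RP c(1) by blast
      qed
      then show "?E a y" using c(2) Esym Etrans by blast
    next
      assume E: "?E a y"
      have "\<forall>b\<in>R. \<not> ?E a b \<longrightarrow> sat K V a (d a b)" using dab[OF a] RP by blast
      then have "sat K V a (chi a)" using sc[of] unfolding chi_def sat_bigconj set_lst[OF fs] by blast
      then show "sat K V y (chi a)" using E unfolding eta_equiv_def by blast
    qed
  qed
  show ?thesis unfolding weak_simplicial_bisim_def
  proof (intro conjI allI impI)
    fix x y assume "?E x y" then show "x \<in> ?P" unfolding eta_equiv_def by blast
  next
    fix x y assume "?E x y" then show "y \<in> ?P" unfolding eta_equiv_def by blast
  next
    fix x y assume "?E x y" then show "?E y x" by (rule Esym)
  next
    fix x1 x2 p assume "?E x1 x2"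
    then have "sat K V x1 (Atom p) \<longleftrightarrow> sat K V x2 (Atom p)" unfolding eta_equiv_def by blast
    then show "x1 \<in> V p \<longleftrightarrow> x2 \<in> V p" by simp
  next
    fix x1 x2 \<pi>1 assume E12: "?E x1 x2" and p1: "topo_path K \<pi>1 x1"
    have p1P: "\<pi>1 r \<in> ?P" if "r \<in> {0..1}" for r
      using p1 that unfolding topo_path_def path_image_def by blast
    define A where "A = {a\<in>R. \<exists>r\<in>{0..<1}. ?E (\<pi>1 r) a}"
    have finA: "finite A" unfolding A_def using finR by simp
    obtain c where c: "c \<in> R" "?E (\<pi>1 1) c" using cover[OF p1P[of 1]] by auto
    define \<psi> where "\<psi> = Eta (bigdisj (map chi (lst A))) (chi c)"
    have dis: "sat K V y (bigdisj (map chi (lst A))) \<longleftrightarrow> (\<exists>a\<in>A. sat K V y (chi a))" for y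
      unfolding sat_bigdisj set_map set_lst[OF finA] by blast
    have "sat K V x1 \<psi>" unfolding \<psi>_def sat.simps
    proof (intro exI conjI)
      show "topo_path K \<pi>1 x1" by (rule p1)
      show "sat K V (\<pi>1 1) (chi c)" using chi[of c "\<pi>1 1"] c RP p1P[of 1] Esym by auto
      show "\<forall>r\<in>{0..<1}. sat K V (\<pi>1 r) (bigdisj (map chi (lst A)))"
      proof
        fix r :: real assume r: "r \<in> {0..<1}"
        have rP: "\<pi>1 r \<in> ?P" using p1P r by auto
        obtain a where a: "a \<in> R" "?E (\<pi>1 r) a" using cover[OF rP] by blast
        have "a \<in> A" unfolding A_def using a r by blast
        moreover have "sat K V (\<pi>1 r) (chi a)" using chi[of a "\<pi>1 r"] a RP rP Esym by blast
        ultimately show "sat K V (\<pi>1 r) (bigdisj (map chi (lst A)))" using dis by blast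
      qed
    qed
    then have "sat K V x2 \<psi>" using E12 unfolding eta_equiv_def by blast
    then obtain \<pi>2 where p2: "topo_path K \<pi>2 x2" "sat K V (\<pi>2 1) (chi c)"
      "\<forall>r\<in>{0..<1}. sat K V (\<pi>2 r) (bigdisj (map chi (lst A)))"
      unfolding \<psi>_def by (simp only: sat.simps) blast
    have p2P: "\<pi>2 r \<in> ?P" if "r \<in> {0..1}" for r
      using p2(1) that unfolding topo_path_def path_image_def by blast
    show "\<exists>\<pi>2. topo_path K \<pi>2 x2 \<and> ?E (\<pi>1 1) (\<pi>2 1) \<and>
              (\<forall>r2\<in>{0..<1}. \<exists>r1\<in>{0..<1}. ?E (\<pi>1 r1) (\<pi>2 r2))"
    proof (intro exI conjI ballI)
      show "topo_path K \<pi>2 x2" by (rule p2(1))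
      have "?E c (\<pi>2 1)" using chi[of c "\<pi>2 1"] p2(2) c(1) RP p2P[of 1] by auto
      then show "?E (\<pi>1 1) (\<pi>2 1)" using c(2) Etrans by blast
    next
      fix r2 :: real assume r2: "r2 \<in> {0..<1}"
      have rP: "\<pi>2 r2 \<in> ?P" using p2P r2 by auto
      obtain a where a: "a \<in> A" "sat K V (\<pi>2 r2) (chi a)" using p2(3) r2 dis by blast
      have aE: "?E a (\<pi>2 r2)" using chi[of a "\<pi>2 r2"] a A_def RP rP by auto
      obtain r1 where r1: "r1 \<in> {0..<1}" "?E (\<pi>1 r1) a" using a(1) unfolding A_def by blast
      show "\<exists>r1\<in>{0..<1}. ?E (\<pi>1 r1) (\<pi>2 r2)" using r1 aE Etrans by blast
    qed
  qed
qed

end
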